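(* Let $\Omega\subset\mathbb{R}^2$ be open, $h>0$, $s\in\{1,2\}$, $u\in W^{1,2}(\Omega,\mathbb{R}^2)$, $\rho$ as in the context, and write $d(x)=\det\nabla u(x)$. Then for a.e. $x\in\Omega_h$: (i) $\Delta^{h,s}(\rho'(d)\operatorname{cof}\nabla u)(x)\cdot\Delta^{h,s}\nabla u(x)\ge-\gamma|\Delta^{h,s}\nabla u(x)|^2$; (ii) $|\Delta^{h,s}(\rho'(d)\operatorname{cof}\nabla u)(x)|\le\gamma|\Delta^{h,s}\nabla u(x)|+\frac{2\gamma}{h}|\nabla u(x)|$.
   Context: Fix $\gamma>0$, $s_0\ge0$, $\kappa\ge-\gamma s_0$; $\rho\in C^\infty(\mathbb{R})$ is convex with $\rho(s)=0$ for $s\le0$, $\rho(s)=\gamma s+\kappa$ for $s\ge s_0$ (smooth convex in between), so $0\le\rho'\le\gamma$ and $\rho'$ is nondecreasing. For $A\in\mathbb{R}^{2\times2}$, $\operatorname{cof}A=\begin{pmatrix}a_{22}&-a_{21}\\-a_{12}&a_{11}\end{pmatrix}$; $|\cdot|$, $\cdot$ are Frobenius norm and inner product. $\Omega_h=\{x\in\Omega:\operatorname{dist}(x,\partial\Omega)>h\}$, $e_1,e_2$ the standard basis, and the difference quotient is $\Delta^{h,s}f(x)=h^{-1}(f(x+he_s)-f(x))$. *)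

theory Defs
  imports "HOL-Analysis.Analysis"
begin

text \<open>2x2 matrices are \<open>real^2^2\<close>; \<open>A $ i $ j\<close> is the entry in row i, column j.
 The library norm / inner product on \<open>real^2^2\<close> are the Frobenius ones.\<close>

definition cof :: "real^2^2 \<Rightarrow> real^2^2" where
  "cof A = (\<chi> i j. if i = 1 \<and> j = 1 then A $ 2 $ 2
                 else if i = 1 \<and> j = 2 then - A $ 2 $ 1
                 else if i = 2 \<and> j = 1 then - A $ 1 $ 2
                 else A $ 1 $ 1)"

definition smooth_real :: "(real \<Rightarrow> real) \<Rightarrow> bool" where
  "smooth_real f \<longleftrightarrow> (\<forall>n x. ((deriv ^^ n) f) differentiable (at x))"

definition pderiv2 :: "2 \<Rightarrow> (real^2 \<Rightarrow> real) \<Rightarrow> real^2 \<Rightarrow> real" where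
  "pderiv2 j f x = deriv (\<lambda>t. f (x + t *\<^sub>R axis j 1)) 0"

definition smooth2 :: "(real^2 \<Rightarrow> real) \<Rightarrow> bool" where
  "smooth2 f \<longleftrightarrow> (\<forall>js x. (foldr pderiv2 js f) differentiable (at x))"

definition test_fun :: "(real^2) set \<Rightarrow> (real^2 \<Rightarrow> real) \<Rightarrow> bool" where
  "test_fun \<Omega> \<phi> \<longleftrightarrow> smooth2 \<phi> \<and> compact (closure {x. \<phi> x \<noteq> 0})
      \<and> closure {x. \<phi> x \<noteq> 0} \<subseteq> \<Omega>"

text \<open>u is in W^{1,2}(\<Omega>,R^2) with weak gradient G, (G x) $ i $ j = \<partial>_j u_i.\<close>
definition sobolev12_grad :: "(real^2) set \<Rightarrow> (real^2 \<Rightarrow> real^2) \<Rightarrow> (real^2 \<Rightarrow> real^2^2) \<Rightarrow> bool" where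
  "sobolev12_grad \<Omega> u G \<longleftrightarrow>
     (\<lambda>x. indicator \<Omega> x *\<^sub>R u x) \<in> borel_measurable lebesgue \<and>
     (\<lambda>x. indicator \<Omega> x *\<^sub>R G x) \<in> borel_measurable lebesgue \<and>
     set_integrable lebesgue \<Omega> (\<lambda>x. (norm (u x))\<^sup>2) \<and>
     set_integrable lebesgue \<Omega> (\<lambda>x. (norm (G x))\<^sup>2) \<and>
     (\<forall>\<phi> i j. test_fun \<Omega> \<phi> \<longrightarrow>
        (LINT x:\<Omega>|lebesgue. u x $ i * pderiv2 j \<phi> x)
          = - (LINT x:\<Omega>|lebesgue. G x $ i $ j * \<phi> x))"

text \<open>\<Omega>_h = {x \<in> \<Omega>. dist(x, \<partial>\<Omega>) > h}, with dist to the empty set = +\<infinity>.\<close>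
definition inner_set :: "(real^2) set \<Rightarrow> real \<Rightarrow> (real^2) set" where
  "inner_set \<Omega> h = {x \<in> \<Omega>. frontier \<Omega> = {} \<or> infdist x (frontier \<Omega>) > h}"

definition diffq :: "real \<Rightarrow> 2 \<Rightarrow> (real^2 \<Rightarrow> 'a::real_vector) \<Rightarrow> real^2 \<Rightarrow> 'a" where
  "diffq h s f x = (1 / h) *\<^sub>R (f (x + h *\<^sub>R axis s 1) - f x)"

definition rho_ok :: "real \<Rightarrow> real \<Rightarrow> real \<Rightarrow> (real \<Rightarrow> real) \<Rightarrow> bool" where
  "rho_ok \<gamma> s0 \<kappa> \<rho> \<longleftrightarrow> \<gamma> > 0 \<and> s0 \<ge> 0 \<and> \<kappa> \<ge> - \<gamma> * s0 \<and>
     smooth_real \<rho> \<and> convex_on UNIV \<rho> \<and>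
     (\<forall>t\<le>0. \<rho> t = 0) \<and> (\<forall>t\<ge>s0. \<rho> t = \<gamma> * t + \<kappa>)"

end

theory Submission
  imports Defs
begin

lemma inner22: "(M::real^2^2) \<bullet> N = M$1$1*N$1$1 + M$1$2*N$1$2 + M$2$1*N$2$1 + M$2$2*N$2$2"
  by (simp add: inner_vec_def sum_2)

lemma cof_comp: "cof A $1$1 = A$2$2" "cof A $1$2 = - A$2$1" "cof A$2$1 = -A$1$2" "cof A$2$2 = A$1$1"
  by (simp_all add: cof_def)

lemma cof_diff: "cof (X - Y) = cof X - cof Y"
  by (simp add: vec_eq_iff forall_2 cof_comp)

lemma norm_cof: "norm (cof X) = norm X"
proof -
  have "(norm (cof X))^2 = (norm X)^2"
    by (simp add: power2_norm_eq_inner inner22 cof_comp algebra_simps)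
  then show ?thesis by (simp add: power2_eq_iff_nonneg)
qed

lemma sq2: "2*\<bar>(a::real) * b\<bar> \<le> a^2 + b^2"
proof -
  have "0 \<le> (\<bar>a\<bar> - \<bar>b\<bar>)^2" by simp
  also have "\<dots> = a^2 + b^2 - 2*\<bar>a * b\<bar>"
    by (simp add: power2_diff abs_mult)
  finally show ?thesis by simp
qed

lemma det_bound: "\<bar>det (H::real^2^2)\<bar> \<le> (norm H)^2 / 2"
proof -
  have n0: "(norm H)^2 = H \<bullet> H" by (rule power2_norm_eq_inner)
  have n: "(norm H)^2 = H$1$1^2 + H$1$2^2 + H$2$1^2 + H$2$2^2"
    using n0 by (simp only: inner22 power2_eq_square)
  have a: "2*\<bar>H$1$1 * H$2$2\<bar> \<le> H$1$1^2 + H$2$2^2"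
    by (rule sq2[of "H$1$1" "H$2$2"])
  have b: "2*\<bar>H$1$2 * H$2$1\<bar> \<le> H$1$2^2 + H$2$1^2"
    by (rule sq2)
  have t: "\<bar>H$1$1 * H$2$2 - H$1$2 * H$2$1\<bar> \<le> \<bar>H$1$1 * H$2$2\<bar> + \<bar>H$1$2 * H$2$1\<bar>"
    by (rule abs_triangle_ineq4)
  show ?thesis unfolding det_2 using a b n t by linarith
qed

lemma slope_ineqs:
  fixes f :: "real \<Rightarrow> real"
  assumes cv: "convex_on UNIV f" and d: "\<And>x. DERIV f x :> D x" and xy: "x < y"
  shows "D x \<le> (f y - f x) / (y - x)" and "(f y - f x) / (y - x) \<le> D y"
proof -
  have t1: "((\<lambda>t. (f t - f x) / (t - x)) \<longlongrightarrow> D x) (at_right x)"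
    using d[of x] has_field_derivative_at_within has_field_derivative_iff by blast
  have ev1: "eventually (\<lambda>t. (f y - f x) / (y - x) \<ge> (f t - f x) / (t - x)) (at_right x)"
  proof -
    have "\<forall>t>x. t < y \<longrightarrow> (f t - f x) / (t - x) \<le> (f y - f x) / (y - x)"
    proof (intro allI impI)
      fix t assume "x < t" "t < y"
      from convex_on_slope_le(1)[OF cv _ _ this] have
        "(f x - f t) / (x - t) \<le> (f x - f y) / (x - y)" by simp
      moreover have "(f x - f t) / (x - t) = (f t - f x) / (t - x)"
        by (metis minus_diff_eq minus_divide_divide)
      moreover have "(f x - f y) / (x - y) = (f y - f x) / (y - x)"
        by (metis minus_diff_eq minus_divide_divide)
      ultimately show "(f t - f x) / (t - x) \<le> (f y - f x) / (y - x)" by simp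
    qed
    then show ?thesis using xy eventually_at_right[of x y] by blast
  qed
  show "D x \<le> (f y - f x) / (y - x)"
    by (rule tendsto_upperbound[OF t1 ev1]) simp
  have t2: "((\<lambda>t. (f t - f y) / (t - y)) \<longlongrightarrow> D y) (at_left y)"
    using d[of y] has_field_derivative_at_within has_field_derivative_iff by blast
  have ev2: "eventually (\<lambda>t. (f y - f x) / (y - x) \<le> (f t - f y) / (t - y)) (at_left y)"
  proof -
    have "\<forall>t>x. t < y \<longrightarrow> (f y - f x) / (y - x) \<le> (f t - f y) / (t - y)"
    proof (intro allI impI)
      fix t assume "x < t" "t < y"
      from convex_on_slope_le(2)[OF cv _ _ this] have
        "(f x - f y) / (x - y) \<le> (f t - f y) / (t - y)" by simp
      moreover have "(f x - f y) / (x - y) = (f y - f x) / (y - x)"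
        by (metis minus_diff_eq minus_divide_divide)
      ultimately show "(f y - f x) / (y - x) \<le> (f t - f y) / (t - y)" by simp
    qed
    then show ?thesis using xy eventually_at_left[of x y] by blast
  qed
  show "(f y - f x) / (y - x) \<le> D y"
    by (rule tendsto_lowerbound[OF t2 ev2]) simp
qed

lemma rho_props:
  assumes "rho_ok \<gamma> s0 \<kappa> \<rho>"
  shows "\<And>t. 0 \<le> deriv \<rho> t" "\<And>t. deriv \<rho> t \<le> \<gamma>"
    "\<And>x y. x \<le> y \<Longrightarrow> deriv \<rho> x \<le> deriv \<rho> y"
proof -
  note r = assms[unfolded rho_ok_def]
  have d: "\<And>x. DERIV \<rho> x :> deriv \<rho> x"
  proof -
    fix x
    have "((deriv ^^ 0) \<rho>) differentiable (at x)" using r smooth_real_def by blast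
    then show "DERIV \<rho> x :> deriv \<rho> x" by (simp add: DERIV_deriv_iff_real_differentiable)
  qed
  have cv: "convex_on UNIV \<rho>" using r by blast
  note S = slope_ineqs[OF cv d]
  show mono: "\<And>x y. x \<le> y \<Longrightarrow> deriv \<rho> x \<le> deriv \<rho> y"
    using S by (metis order.trans order_le_less)
  have neg: "deriv \<rho> x = 0" if "x < 0" for x
  proof -
    have "deriv \<rho> x \<le> (\<rho> (x/2) - \<rho> x) / (x/2 - x)" using S(1)[of x "x/2"] that by simp
    moreover have "(\<rho> x - \<rho> (2*x)) / (x - 2*x) \<le> deriv \<rho> x" using S(2)[of "2*x" x] that by simp
    moreover have "\<rho> x = 0" "\<rho> (x/2) = 0" "\<rho> (2*x) = 0" using r that by auto
    ultimately show ?thesis by simp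
  qed
  have big: "deriv \<rho> x = \<gamma>" if "x > s0" for x
  proof -
    define m where "m = (x+s0)/2"
    have mx: "m < x" "s0 \<le> m" using that r by (auto simp: m_def)
    have a: "deriv \<rho> x \<le> (\<rho> (x+1) - \<rho> x) / ((x+1) - x)" using S(1)[of x "x+1"] by simp
    have b: "(\<rho> x - \<rho> m) / (x - m) \<le> deriv \<rho> x"
      using S(2)[of m x] mx by simp
    have v: "\<rho> x = \<gamma>*x+\<kappa>" "\<rho> (x+1) = \<gamma>*(x+1)+\<kappa>" "\<rho> m = \<gamma>*m+\<kappa>"
      using r that mx by auto
    have e1: "(\<rho> (x+1) - \<rho> x) / ((x+1) - x) = \<gamma>"
      unfolding v by (simp add: distrib_left)
    have "\<rho> x - \<rho> m = \<gamma> * (x - m)" unfolding v by (simp add: right_diff_distrib)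
    then have e2: "(\<rho> x - \<rho> m) / (x - m) = \<gamma>" using mx by simp
    show ?thesis using a b e1 e2 by simp
  qed
  show "0 \<le> deriv \<rho> t" for t
    using mono[of "min t 0 - 1" t] neg[of "min t 0 - 1"] by simp
  show "deriv \<rho> t \<le> \<gamma>" for t
    using mono[of t "max t s0 + 1"] big[of "max t s0 + 1"] by simp
qed

lemma pointwise:
  fixes A B :: "real^2^2" and D :: "real \<Rightarrow> real"
  assumes D0: "\<And>t. 0 \<le> D t" and Dg: "\<And>t. D t \<le> \<gamma>"
    and Dm: "\<And>x y. x \<le> y \<Longrightarrow> D x \<le> D y"
  shows "(D (det B) *\<^sub>R cof B - D (det A) *\<^sub>R cof A) \<bullet> (B - A) \<ge> - \<gamma> * (norm (B - A))^2"
    and "norm (D (det B) *\<^sub>R cof B - D (det A) *\<^sub>R cof A) \<le> \<gamma> * norm (B - A) + \<gamma> * norm A"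
proof -
  let ?p = "D (det A)" and ?q = "D (det B)"
  have id: "(?q *\<^sub>R cof B - ?p *\<^sub>R cof A) \<bullet> (B - A)
      = (?q - ?p) * (det B - det A) + (?q + ?p) * det (B - A)"
    by (simp add: inner22 cof_comp det_2 algebra_simps)
  have m: "(?q - ?p) * (det B - det A) \<ge> 0"
  proof (cases "det A \<le> det B")
    case True then show ?thesis using Dm[OF True] by simp
  next
    case False then have "det B \<le> det A" by simp
    then have "?q \<le> ?p" by (rule Dm)
    then show ?thesis using \<open>det B \<le> det A\<close> by (simp add: mult_nonpos_nonpos)
  qed
  have db: "\<bar>det (B - A)\<bar> \<le> (norm (B - A))^2 / 2" by (rule det_bound)
  have "\<bar>(?q + ?p) * det (B - A)\<bar> \<le> (2*\<gamma>) * ((norm (B - A))^2 / 2)"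
    unfolding abs_mult
    apply (rule mult_mono)
    using D0[of "det A"] D0[of "det B"] Dg[of "det A"] Dg[of "det B"] db by auto
  then show "(?q *\<^sub>R cof B - ?p *\<^sub>R cof A) \<bullet> (B - A) \<ge> - \<gamma> * (norm (B - A))^2"
    using id m by (simp add: abs_le_iff)
  have e: "?q *\<^sub>R cof B - ?p *\<^sub>R cof A = ?q *\<^sub>R cof (B - A) + (?q - ?p) *\<^sub>R cof A"
    by (simp add: cof_diff algebra_simps)
  have "norm (?q *\<^sub>R cof B - ?p *\<^sub>R cof A) \<le> \<bar>?q\<bar> * norm (B - A) + \<bar>?q - ?p\<bar> * norm A"
    unfolding e using norm_triangle_ineq[of "?q *\<^sub>R cof (B - A)" "(?q - ?p) *\<^sub>R cof A"]
    by (simp add: norm_cof)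
  also have "\<dots> \<le> \<gamma> * norm (B - A) + \<gamma> * norm A"
    apply (rule add_mono; rule mult_right_mono)
    using D0[of "det A"] D0[of "det B"] Dg[of "det A"] Dg[of "det B"] by auto
  finally show "norm (?q *\<^sub>R cof B - ?p *\<^sub>R cof A) \<le> \<gamma> * norm (B - A) + \<gamma> * norm A" .
qed

theorem lemma4p1:
  fixes \<Omega> :: "(real^2) set" and h \<gamma> s0 \<kappa> :: real and s :: 2
    and \<rho> :: "real \<Rightarrow> real" and u :: "real^2 \<Rightarrow> real^2" and Du :: "real^2 \<Rightarrow> real^2^2"
  assumes "open \<Omega>" and "h > 0"
    and "rho_ok \<gamma> s0 \<kappa> \<rho>"
    and "sobolev12_grad \<Omega> u Du"
  shows "AE x in lebesgue. x \<in> inner_set \<Omega> h \<longrightarrow>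
      (let F = (\<lambda>y. deriv \<rho> (det (Du y)) *\<^sub>R cof (Du y)) in
        diffq h s F x \<bullet> diffq h s Du x \<ge> - \<gamma> * (norm (diffq h s Du x))\<^sup>2 \<and>
        norm (diffq h s F x) \<le> \<gamma> * norm (diffq h s Du x) + (2 * \<gamma> / h) * norm (Du x))"
proof (rule AE_I2, intro impI)
  fix x
  have g: "\<gamma> > 0" using assms(3) by (simp add: rho_ok_def)
  note R = rho_props[OF assms(3)]
  define A where "A = Du x"
  define B where "B = Du (x + h *\<^sub>R axis s 1)"
  define F where "F = (\<lambda>y. deriv \<rho> (det (Du y)) *\<^sub>R cof (Du y))"
  note P = pointwise[where D="deriv \<rho>" and \<gamma>=\<gamma> and A=A and B=B, OF R]
  have dF: "diffq h s F x = (1/h) *\<^sub>R (deriv \<rho> (det B) *\<^sub>R cof B - deriv \<rho> (det A) *\<^sub>R cof A)"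
    by (simp add: diffq_def F_def A_def B_def)
  have dD: "diffq h s Du x = (1/h) *\<^sub>R (B - A)"
    by (simp add: diffq_def A_def B_def)
  have hp: "h > 0" by (rule assms(2))
  have nD: "norm (diffq h s Du x) = (1/h) * norm (B - A)"
    unfolding dD using hp by simp
  have i1: "diffq h s F x \<bullet> diffq h s Du x \<ge> - \<gamma> * (norm (diffq h s Du x))\<^sup>2"
  proof -
    have "diffq h s F x \<bullet> diffq h s Du x =
      (1/h) * ((1/h) * ((deriv \<rho> (det B) *\<^sub>R cof B - deriv \<rho> (det A) *\<^sub>R cof A) \<bullet> (B - A)))"
      unfolding dF dD by (simp only: inner_scaleR_left inner_scaleR_right)
    also have "\<dots> = (1/h)^2 * ((deriv \<rho> (det B) *\<^sub>R cof B - deriv \<rho> (det A) *\<^sub>R cof A) \<bullet> (B - A))"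
      by (simp only: power2_eq_square mult.assoc)
    finally have e: "diffq h s F x \<bullet> diffq h s Du x = (1/h)^2 * ((deriv \<rho> (det B) *\<^sub>R cof B - deriv \<rho> (det A) *\<^sub>R cof A) \<bullet> (B - A))" .
    have c0: "0 \<le> (1/h)^2" by (rule zero_le_power2)
    have m: "(1/h)^2 * (- \<gamma> * (norm (B - A))^2) \<le> (1/h)^2 * ((deriv \<rho> (det B) *\<^sub>R cof B - deriv \<rho> (det A) *\<^sub>R cof A) \<bullet> (B - A))"
      by (rule mult_left_mono[OF P(1) c0])
    have k: "- \<gamma> * (norm (diffq h s Du x))^2 = (1/h)^2 * (- \<gamma> * (norm (B - A))^2)"
      unfolding nD by (simp only: power_mult_distrib mult_ac)
    show ?thesis using e k m by linarith
  qed
  have i2: "norm (diffq h s F x) \<le> \<gamma> * norm (diffq h s Du x) + (2 * \<gamma> / h) * norm (Du x)"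
  proof -
    have c0: "0 \<le> 1/h" using hp by simp
    have "norm (diffq h s F x) = (1/h) * norm (deriv \<rho> (det B) *\<^sub>R cof B - deriv \<rho> (det A) *\<^sub>R cof A)"
      unfolding dF using hp by simp
    also have "\<dots> \<le> (1/h) * (\<gamma> * norm (B - A) + \<gamma> * norm A)"
      by (rule mult_left_mono[OF P(2) c0])
    also have "\<dots> = \<gamma> * ((1/h) * norm (B - A)) + (\<gamma> / h) * norm A"
      by (simp only: distrib_left mult_ac divide_inverse mult_1_left)
    also have "\<dots> = \<gamma> * norm (diffq h s Du x) + (\<gamma> / h) * norm (Du x)"
      by (simp only: nD A_def)
    also have "\<dots> \<le> \<gamma> * norm (diffq h s Du x) + (2 * \<gamma> / h) * norm (Du x)"
    proof -
      have "\<gamma> / h \<le> 2 * \<gamma> / h" using g hp by (simp add: divide_right_mono)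
      then show ?thesis by (rule add_left_mono[OF mult_right_mono[OF _ norm_ge_zero]])
    qed
    finally show ?thesis .
  qed
  show "let F = (\<lambda>y. deriv \<rho> (det (Du y)) *\<^sub>R cof (Du y)) in
        diffq h s F x \<bullet> diffq h s Du x \<ge> - \<gamma> * (norm (diffq h s Du x))\<^sup>2 \<and>
        norm (diffq h s F x) \<le> \<gamma> * norm (diffq h s Du x) + (2 * \<gamma> / h) * norm (Du x)"
    unfolding Let_def F_def[symmetric] using i1 i2 by (rule conjI)
qed

end
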